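(* Let $m\ge n\ge 1$ be integers and let $$T_{m,n}(z)=\frac{(m-n) z^2 +2 (m+n) z +m-n}{(m+n) z^2 +2(m-n)z +m+n},$$ regarded as a rational map of the Riemann sphere. Let $J_{m,n}$ denote the Julia set of $T_{m,n}$. Then: (1) If $m=n$, then $J_{m,m}$ is the imaginary axis. (2) If $m>n\ge 1$, then $J_{m,n}$ is the circle $$J_{m,n}=\left\{z\in\mathbb{C}: \left|z+\frac{m^2+n^2}{m^2-n^2}\right|=\frac{2mn}{m^2-n^2}\right\}.$$
   Context: The map $T_{m,n}$ is the rational function obtained by applying Schröder's root-finding method $S_f(z)=z-\dfrac{f(z)f'(z)}{f'(z)^2-f(z)f''(z)}$ to the polynomial $f(z)=(z-1)^m(z+1)^n$ (equivalently, the affine conjugate of Schröder's method for $(z-a)^m(z-b)^n$ moving $a$ to $1$ and $b$ to $-1$). The Julia set of a rational map is the standard one from complex dynamics (the complement of the set of points where the family of iterates is normal). *)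

theory Defs
  imports "HOL-Analysis.Analysis"
begin

text \<open>The Riemann sphere is modelled as complex option: Some z is the finite
point z, None is the point at infinity. It carries the chordal metric.\<close>

definition chordal :: "complex option \<Rightarrow> complex option \<Rightarrow> real" where
  "chordal a b = (case (a, b) of
      (Some z, Some w) \<Rightarrow> 2 * cmod (z - w) / (sqrt (1 + (cmod z)^2) * sqrt (1 + (cmod w)^2))
    | (Some z, None) \<Rightarrow> 2 / sqrt (1 + (cmod z)^2)
    | (None, Some w) \<Rightarrow> 2 / sqrt (1 + (cmod w)^2)
    | (None, None) \<Rightarrow> 0)"

definition chball :: "complex option \<Rightarrow> real \<Rightarrow> complex option set" where
  "chball x r = {y. chordal x y < r}"

definition normal_family_on ::
  "(complex option \<Rightarrow> complex option) set \<Rightarrow> complex option set \<Rightarrow> bool" where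
  "normal_family_on F U \<longleftrightarrow>
     (\<forall>f. (\<forall>k. f k \<in> F) \<longrightarrow>
        (\<exists>r g. strict_mono (r :: nat \<Rightarrow> nat) \<and>
           (\<forall>x\<in>U. \<exists>\<delta>>0. chball x \<delta> \<subseteq> U \<and>
              (\<forall>\<epsilon>>0. \<exists>N. \<forall>j\<ge>N. \<forall>y\<in>chball x \<delta>.
                  chordal (f (r j) y) (g y) < \<epsilon>))))"

definition fatou_set :: "(complex option \<Rightarrow> complex option) \<Rightarrow> complex option set" where
  "fatou_set R = {x. \<exists>\<rho>>0. normal_family_on (range (\<lambda>k. R ^^ k)) (chball x \<rho>)}"

definition julia_set :: "(complex option \<Rightarrow> complex option) \<Rightarrow> complex option set" where
  "julia_set R = UNIV - fatou_set R"

text \<open>T_{m,n} as a self-map of the sphere. Numerator and denominator have no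
common root (num - den = -2n(z-1)^2 and den(1) = 4m), so poles go to infinity,
and T(infinity) = (m-n)/(m+n).\<close>

definition T_mn :: "nat \<Rightarrow> nat \<Rightarrow> complex option \<Rightarrow> complex option" where
  "T_mn m n w = (case w of
      None \<Rightarrow> Some ((of_nat m - of_nat n) / (of_nat m + of_nat n))
    | Some z \<Rightarrow>
        (let num = (of_nat m - of_nat n) * z^2 + 2 * (of_nat m + of_nat n) * z + (of_nat m - of_nat n);
             den = (of_nat m + of_nat n) * z^2 + 2 * (of_nat m - of_nat n) * z + (of_nat m + of_nat n)
         in if den = 0 then None else Some (num / den)))"

end

theory Submission
  imports Defs
begin

definition stereo :: "complex option \<Rightarrow> complex \<times> real" where
  "stereo x = (case x of None \<Rightarrow> (0, 1)
     | Some z \<Rightarrow> (complex_of_real (2 / (1 + (cmod z)^2)) * z, ((cmod z)^2 - 1) / (1 + (cmod z)^2)))"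

lemma key_id:
  fixes x y p q :: real
  defines "S \<equiv> 1 + x^2 + y^2" and "T \<equiv> 1 + p^2 + q^2"
  shows "(2/S*x - 2/T*p)^2 + (2/S*y - 2/T*q)^2 + ((x^2+y^2-1)/S - (p^2+q^2-1)/T)^2
         = 4 * ((x-p)^2 + (y-q)^2) / (S * T)"
proof -
  have S: "S > 0" "T > 0" unfolding S_def T_def by (simp_all add: add_pos_nonneg)
  have e: "(2*x*T - 2*p*S)^2 + (2*y*T-2*q*S)^2 + ((x^2+y^2-1)*T - (p^2+q^2-1)*S)^2 = 4*((x-p)^2+(y-q)^2)*S*T"
    unfolding S_def T_def by algebra
  have "(2/S*x - 2/T*p)^2 + (2/S*y - 2/T*q)^2 + ((x^2+y^2-1)/S - (p^2+q^2-1)/T)^2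
     = ((2*x*T - 2*p*S)^2 + (2*y*T-2*q*S)^2 + ((x^2+y^2-1)*T - (p^2+q^2-1)*S)^2) / (S*T)^2"
    using S by (simp add: field_simps power2_eq_square)
  also have "\<dots> = 4 * ((x-p)^2 + (y-q)^2) / (S * T)" using S unfolding e by (simp add: power2_eq_square)
  finally show ?thesis .
qed
lemma key_id2:
  fixes x y :: real
  defines "S \<equiv> 1 + x^2 + y^2"
  shows "(2/S*x)^2 + (2/S*y)^2 + ((x^2+y^2-1)/S - 1)^2 = 4 / S"
proof -
  have S: "S > 0" unfolding S_def by (simp_all add: add_pos_nonneg)
  have e: "(2*x)^2 + (2*y)^2 + ((x^2+y^2-1) - S)^2 = 4*S"
    unfolding S_def by algebra
  have "(2/S*x)^2 + (2/S*y)^2 + ((x^2+y^2-1)/S - 1)^2 = ((2*x)^2 + (2*y)^2 + ((x^2+y^2-1) - S)^2)/S^2"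
    using S by (simp add: field_simps power2_eq_square)
  also have "\<dots> = 4/S" using S unfolding e by (simp add: power2_eq_square)
  finally show ?thesis .
qed

lemma stereo_ss:
  "dist (stereo (Some z)) (stereo (Some w)) = 2 * cmod (z - w) / (sqrt (1 + (cmod z)^2) * sqrt (1 + (cmod w)^2))"
proof -
  obtain x y where z: "z = Complex x y" by (cases z)
  obtain p q where w: "w = Complex p q" by (cases w)
  have c: "(cmod z)^2 = x^2 + y^2" "(cmod w)^2 = p^2+q^2" "(cmod (z-w))^2 = (x-p)^2 + (y-q)^2"
    by (simp_all add: z w cmod_power2)
  have "(dist (complex_of_real (2 / (1 + (cmod z)^2)) * z) (complex_of_real (2 / (1 + (cmod w)^2)) * w))^2
       + (dist (((cmod z)^2 - 1) / (1 + (cmod z)^2)) (((cmod w)^2 - 1) / (1 + (cmod w)^2)))^2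
       = 4 * (cmod (z - w))^2 / ((1 + (cmod z)^2) * (1 + (cmod w)^2))"
    unfolding c using key_id[of x y p q]
    by (simp add: z w dist_norm cmod_power2 dist_real_def add.assoc)
  then have "dist (stereo (Some z)) (stereo (Some w)) = sqrt (4 * (cmod (z - w))^2 / ((1 + (cmod z)^2) * (1 + (cmod w)^2)))"
    by (simp add: stereo_def dist_Pair_Pair)
  also have "\<dots> = 2 * cmod (z - w) / (sqrt (1 + (cmod z)^2) * sqrt (1 + (cmod w)^2))"
    by (simp add: real_sqrt_divide real_sqrt_mult)
  finally show ?thesis .
qed

lemma stereo_sn:
  "dist (stereo (Some z)) (stereo None) = 2 / sqrt (1 + (cmod z)^2)"
proof -
  obtain x y where z: "z = Complex x y" by (cases z)
  have c: "(cmod z)^2 = x^2 + y^2"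
    by (simp_all add: z cmod_power2)
  have "(dist (complex_of_real (2 / (1 + (cmod z)^2)) * z) 0)^2
       + (dist (((cmod z)^2 - 1) / (1 + (cmod z)^2)) 1)^2 = 4 / (1 + (cmod z)^2)"
    unfolding c using key_id2[of x y]
    by (simp add: z dist_norm cmod_power2 dist_real_def add.assoc)
  then show ?thesis
    by (simp add: stereo_def dist_Pair_Pair real_sqrt_divide)
qed

lemma chordal_dist: "chordal x y = dist (stereo x) (stereo y)"
proof (cases x; cases y)
  fix a assume "x = None" "y = Some a" then show ?thesis
    using stereo_sn[of a] by (simp add: chordal_def dist_commute)
next
  fix a assume "x = Some a" "y = None" then show ?thesis
    using stereo_sn[of a] by (simp add: chordal_def)
qed (simp_all add: chordal_def stereo_ss)

lemma chordal_sym: "chordal x y = chordal y x"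
  by (simp add: chordal_dist dist_commute)
lemma chordal_refl[simp]: "chordal x x = 0"
  by (simp add: chordal_dist)
lemma chordal_nonneg: "chordal x y \<ge> 0"
  by (simp add: chordal_dist)
lemma chordal_tri: "chordal x z \<le> chordal x y + chordal y z"
  by (simp add: chordal_dist dist_triangle)


lemma chball_sub: "chordal x0 x < \<rho> \<Longrightarrow> chball x (\<rho> - chordal x0 x) \<subseteq> chball x0 \<rho>"
proof (clarsimp simp: chball_def)
  fix y assume "chordal x y < \<rho> - chordal x0 x"
  then show "chordal x0 y < \<rho>" using chordal_tri[of x0 y x] by linarith
qed

lemma chball_open: "x \<in> chball x0 \<rho> \<Longrightarrow> \<exists>\<delta>>0. chball x \<delta> \<subseteq> chball x0 \<rho>"
  using chball_sub[of x0 x \<rho>] unfolding chball_def by (intro exI[of _ "\<rho> - chordal x0 x"]) auto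

lemma normal_from_unif:
  fixes R :: "complex option \<Rightarrow> complex option"
  assumes unif: "\<forall>\<epsilon>>0. \<exists>N. \<forall>k\<ge>N. \<forall>y\<in>U. chordal ((R^^k) y) A < \<epsilon>"
  and opn: "\<forall>x\<in>U. \<exists>\<delta>>0. chball x \<delta> \<subseteq> U"
  shows "normal_family_on (range (\<lambda>k. R^^k)) U"
  unfolding normal_family_on_def
proof (intro allI impI)
  fix f :: "nat \<Rightarrow> complex option \<Rightarrow> complex option"
  assume "\<forall>k. f k \<in> range (\<lambda>k. R^^k)"
  then have "\<forall>k. \<exists>i. f k = R^^i" by auto
  then obtain nn where nn: "\<forall>k. f k = R^^(nn k)" by metis
  show "\<exists>r g. strict_mono (r :: nat \<Rightarrow> nat) \<and>
           (\<forall>x\<in>U. \<exists>\<delta>>0. chball x \<delta> \<subseteq> U \<and>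
              (\<forall>\<epsilon>>0. \<exists>N. \<forall>j\<ge>N. \<forall>y\<in>chball x \<delta>.
                  chordal (f (r j) y) (g y) < \<epsilon>))"
  proof (cases "\<exists>c. infinite {k. nn k = c}")
    case True
    then obtain c where "infinite {k. nn k = c}" by blast
    then obtain r :: "nat \<Rightarrow> nat" where r: "strict_mono r" "\<forall>j. r j \<in> {k. nn k = c}"
      using infinite_enumerate by blast
    show ?thesis
      apply (rule exI[of _ r], rule exI[of _ "R^^c"])
      using r nn opn by auto
  next
    case False
    then have fin: "\<forall>c. finite {k. nn k = c}" by blast
    have ev: "\<exists>N. \<forall>j\<ge>N. nn j \<ge> M" for M
    proof -
      have "{j. nn j < M} = (\<Union>c<M. {k. nn k = c})" by auto
      then have "finite {j. nn j < M}" using fin by auto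
      then obtain N where N: "\<forall>j\<in>{j. nn j < M}. j < N" using finite_nat_set_iff_bounded by blast
      show ?thesis
      proof (rule exI[of _ N], intro allI impI)
        fix j assume "j \<ge> N"
        show "nn j \<ge> M"
        proof (rule ccontr)
          assume "\<not> M \<le> nn j" then have "j \<in> {j. nn j < M}" by simp
          then have "j < N" using N by blast
          then show False using \<open>j\<ge>N\<close> by simp
        qed
      qed
    qed
    show ?thesis
    proof (rule exI[of _ id], rule exI[of _ "\<lambda>_. A"], intro conjI ballI)
      show "strict_mono (id :: nat \<Rightarrow> nat)" by (simp add: strict_mono_def)
      fix x assume "x \<in> U"
      then obtain \<delta> where d: "\<delta>>0" "chball x \<delta> \<subseteq> U" using opn by blast
      moreover have "\<forall>\<epsilon>>0. \<exists>N. \<forall>j\<ge>N. \<forall>y\<in>chball x \<delta>. chordal (f (id j) y) A < \<epsilon>"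
      proof (intro allI impI)
        fix \<epsilon>::real assume "\<epsilon>>0"
        then obtain K where K: "\<forall>k\<ge>K. \<forall>y\<in>U. chordal ((R^^k) y) A < \<epsilon>" using unif by blast
        obtain N where "\<forall>j\<ge>N. nn j \<ge> K" using ev by blast
        then show "\<exists>N. \<forall>j\<ge>N. \<forall>y\<in>chball x \<delta>. chordal (f (id j) y) A < \<epsilon>"
          using K nn d by (metis id_apply subsetD)
      qed
      ultimately show "\<exists>\<delta>>0. chball x \<delta> \<subseteq> U \<and> (\<forall>\<epsilon>>0. \<exists>N. \<forall>j\<ge>N. \<forall>y\<in>chball x \<delta>. chordal (f (id j) y) A < \<epsilon>)"
        by blast
    qed
  qed
qed

lemma chordal_le: "chordal (Some z) (Some w) \<le> 2 * cmod (z - w)"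
proof -
  have "sqrt (1 + (cmod z)^2) * sqrt (1 + (cmod w)^2) \<ge> 1 * 1"
    by (intro mult_mono) auto
  then show ?thesis unfolding chordal_def
    by (simp add: divide_le_eq_1 field_simps mult_le_cancel_left1)
qed

lemma chordal_E:
  assumes "\<epsilon> > 0"
  shows "\<exists>\<delta>>0. \<forall>y. chordal (Some z0) y < \<delta> \<longrightarrow> (\<exists>z. y = Some z \<and> cmod (z - z0) < \<epsilon>)"
proof -
  define r0 where "r0 = sqrt (1 + (cmod z0)^2)"
  have r0: "r0 \<ge> 1" unfolding r0_def by simp
  have c0: "chordal (Some z0) None = 2 / r0" unfolding chordal_def r0_def by simp
  define \<delta> where "\<delta> = min (1 / r0) (\<epsilon> / r0^2)"
  have dpos: "\<delta> > 0" using r0 assms unfolding \<delta>_def by simp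
  have "\<forall>y. chordal (Some z0) y < \<delta> \<longrightarrow> (\<exists>z. y = Some z \<and> cmod (z - z0) < \<epsilon>)"
  proof (intro allI impI)
    fix y assume y: "chordal (Some z0) y < \<delta>"
    show "\<exists>z. y = Some z \<and> cmod (z - z0) < \<epsilon>"
    proof (cases y)
      case None
      then show ?thesis using y c0 r0 unfolding \<delta>_def by (simp add: field_simps)
    next
      case (Some z)
      define r where "r = sqrt (1 + (cmod z)^2)"
      have r: "r \<ge> 1" unfolding r_def by simp
      have cz: "chordal (Some z) None = 2 / r" unfolding chordal_def r_def by simp
      have czz: "chordal (Some z0) (Some z) = 2 * cmod (z0 - z) / (r0 * r)" unfolding chordal_def r_def r0_def by simp
      have t: "chordal (Some z0) None \<le> chordal (Some z0) (Some z) + chordal (Some z) None"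
        by (rule chordal_tri)
      have "chordal (Some z0) (Some z) < 1/r0" using y Some unfolding \<delta>_def by simp
      then have "2 / r0 < 1/r0 + 2 / r"
        using t c0 cz by linarith
      then have "1/r0 < 2/r" by simp
      then have rr: "r < 2 * r0" using r r0 by (simp add: field_simps)
      have "2 * cmod (z0 - z) / (r0 * r) < \<epsilon> / r0^2" using y Some czz unfolding \<delta>_def by simp
      then have "2 * cmod (z0 - z) * r0 < \<epsilon> * r" using r r0 by (simp add: field_simps power2_eq_square)
      also have "\<dots> < \<epsilon> * (2 * r0)" using rr assms by simp
      finally have "cmod (z0 - z) < \<epsilon>" using r0 by simp
      then show ?thesis using Some by (simp add: norm_minus_commute)
    qed
  qed
  then show ?thesis using dpos by blast
qed

lemma chordal_open:
  fixes g :: "complex \<Rightarrow> real"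
  assumes "isCont g z0" "g z0 > 0"
  shows "\<exists>\<rho>>0. \<forall>y. chordal (Some z0) y < \<rho> \<longrightarrow> (\<exists>z. y = Some z \<and> g z > 0)"
proof -
  obtain d where d: "d > 0" "\<forall>x. dist x z0 < d \<longrightarrow> dist (g x) (g z0) < g z0"
    using assms unfolding continuous_at_eps_delta by blast
  obtain \<rho> where "\<rho>>0" "\<forall>y. chordal (Some z0) y < \<rho> \<longrightarrow> (\<exists>z. y = Some z \<and> cmod (z - z0) < d)"
    using chordal_E[OF d(1)] by blast
  then show ?thesis using d by (metis dist_norm dist_real_def abs_diff_less_iff diff_gt_0_iff_gt diff_self)
qed

locale mn =
  fixes m n :: nat
  assumes n1: "1 \<le> n" and nm: "n \<le> m"
begin

definition c :: complex where "c = - (of_nat n / of_nat m)"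
definition a :: real where "a = real n / real m"
abbreviation T where "T \<equiv> T_mn m n"
definition Phi :: "complex option \<Rightarrow> complex option" where
  "Phi x = (case x of None \<Rightarrow> Some c | Some z \<Rightarrow> if z = -1 then None else Some (c * (z - 1) / (z + 1)))"

lemma a_pos: "a > 0" and a_le1: "a \<le> 1" and cmod_c: "cmod c = a" and c_nz: "c \<noteq> 0"
  using n1 nm by (auto simp: a_def c_def norm_divide)

lemma Phi_None_iff: "Phi x = None \<longleftrightarrow> x = Some (-1)"
  by (cases x) (auto simp: Phi_def)

lemma Phi_conj: "Phi (T x) = map_option (\<lambda>u. u^2) (Phi x)"
proof -
  define M :: complex where "M = of_nat m"
  define N :: complex where "N = of_nat n"
  have MN: "M \<noteq> 0" "N \<noteq> 0" "M + N \<noteq> 0" using n1 nm unfolding M_def N_def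
    by (simp_all del: of_nat_add add: of_nat_add[symmetric])
  have cc: "c = - (N / M)" unfolding c_def M_def N_def by simp
  show ?thesis
  proof (cases x)
    case None
    have ne: "(M - N) / (M + N) \<noteq> -1"
    proof
      assume "(M - N) / (M + N) = -1"
      then have "M - N = - (M + N)" using MN by (simp add: field_simps)
      then have "M = 0" by simp
      then show False using MN by simp
    qed
    have "c * ((M - N) / (M + N) - 1) / ((M - N) / (M + N) + 1) = c^2"
    proof -
      have h1: "(M - N) / (M + N) - 1 = -2*N/(M+N)" using MN by (simp add: field_simps)
      have h2: "(M - N) / (M + N) + 1 = 2*M/(M+N)" using MN by (simp add: field_simps)
      have y0: "2*M/(M+N) \<noteq> 0" using MN by simp
      have "c * (-2*N/(M+N)) = c*(-(N/M)) * (2*M/(M+N))" using MN by (simp add: field_simps)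
      then have "c * (-2*N/(M+N)) / (2*M/(M+N)) = c * (- (N / M))" using y0 by (metis nonzero_mult_div_cancel_right)
      then show ?thesis unfolding h1 h2 by (simp add: cc power2_eq_square)
    qed
    then show ?thesis using None ne
      by (simp add: T_mn_def Phi_def M_def N_def)
  next
    case (Some z)
    define num where "num = (M - N) * z^2 + 2 * (M + N) * z + (M - N)"
    define den where "den = (M + N) * z^2 + 2 * (M - N) * z + (M + N)"
    have Tz: "T x = (if den = 0 then None else Some (num / den))"
      using Some unfolding T_mn_def num_def den_def M_def N_def by (simp add: Let_def)
    have e1: "num - den = - 2 * N * (z - 1)^2" unfolding num_def den_def by (simp add: algebra_simps power2_eq_square)
    have e2: "num + den = 2 * M * (z + 1)^2" unfolding num_def den_def by (simp add: algebra_simps power2_eq_square)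
    show ?thesis
    proof (cases "z = -1")
      case True
      have "den = 4 * N" "num = - 4 * N" unfolding den_def num_def True by (simp_all add: algebra_simps power2_eq_square)
      then have "T x = Some (-1)" using Tz MN by simp
      then show ?thesis using True Some by (simp add: Phi_def)
    next
      case False
      then have z1: "z + 1 \<noteq> 0" by (metis add.commute add_eq_0_iff2)
      show ?thesis
      proof (cases "den = 0")
        case True
        have a1: "num = 2 * M * (z + 1)^2" using e2 True by simp
        have a2: "num = - 2 * N * (z - 1)^2" using e1 True by simp
        have "2 * M * (z + 1)^2 = - 2 * N * (z - 1)^2" using a1 a2 by simp
        then have "M * (z+1)^2 = - N * (z-1)^2" by simp
        then have zz: "(z-1)^2 = -(M/N) * (z+1)^2" using MN by (simp add: field_simps)
        have "(c * (z - 1) / (z + 1))^2 = c^2 * (z-1)^2 / (z+1)^2" by (simp add: power_divide power_mult_distrib)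
        also have "\<dots> = c^2 * (-(M/N))" unfolding zz using z1 by simp
        also have "\<dots> = c" unfolding cc using MN by (simp add: power2_eq_square)
        finally have "c = (c * (z - 1) / (z + 1))^2" by simp
        then show ?thesis using True Tz Some False by (simp add: Phi_def)
      next
        case False
        have nd: "num / den + 1 \<noteq> 0"
        proof
          assume "num / den + 1 = 0"
          then have "num + den = 0" using False by (simp add: field_simps)
          then show False using e2 MN z1 by simp
        qed
        then have nd': "num / den \<noteq> -1" by (metis add_eq_0_iff2 add.commute)
        have "c * (num / den - 1) / (num / den + 1) = c * (num - den) / (num + den)"
        proof -
          have h1: "num/den - 1 = (num-den)/den" using False by (simp add: field_simps)
          have h2: "num/den + 1 = (num+den)/den" using False by (simp add: field_simps)
          have "c * ((num-den)/den) / ((num+den)/den) = c * (num-den) / (num+den)"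
            using False by simp
          then show ?thesis unfolding h1 h2 .
        qed
        also have "\<dots> = c * (- 2 * N * (z - 1)^2) / (2 * M * (z + 1)^2)" unfolding e1 e2 ..
        also have "\<dots> = c * (- 2 * N / (2 * M)) * ((z-1)^2/(z+1)^2)"
          by (simp add: mult_ac)
        also have "- 2 * N / (2 * M) = c" using cc by simp
        also have "c * c * ((z-1)^2/(z+1)^2) = (c * (z - 1) / (z + 1))^2"
          by (simp add: power_divide power_mult_distrib power2_eq_square mult_ac)
        finally show ?thesis using False Tz Some \<open>z \<noteq> -1\<close> nd' by (simp add: Phi_def)
      qed
    qed
  qed
qed

lemma Phi_iter: "Phi ((T ^^ k) x) = map_option (\<lambda>u. u^(2^k)) (Phi x)"
proof (induction k)
  case 0 then show ?case by (cases "Phi x") simp_all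
next
  case (Suc k)
  then show ?case by (cases "Phi x") (simp_all add: Phi_conj power_mult[symmetric] mult.commute)
qed

end

context mn begin

lemma Phi_Some: "Phi (Some z) = Some v \<Longrightarrow> z \<noteq> -1 \<and> v * (z + 1) = c * (z - 1)"
proof -
  assume h: "Phi (Some z) = Some v"
  then have z: "z \<noteq> -1" by (auto simp: Phi_def split: if_splits)
  then have "z + 1 \<noteq> 0" by (metis add_eq_0_iff2 add.commute)
  then show ?thesis using h z by (auto simp: Phi_def)
qed

lemma Phi_None_val: "Phi None = Some v \<Longrightarrow> v = c"
  by (simp add: Phi_def)

lemma inside_close:
  assumes "Phi w = Some v" "cmod v \<le> a/2"
  shows "chordal w (Some 1) \<le> 8/a * cmod v"
proof (cases w)
  case None
  then show ?thesis using assms Phi_None_val cmod_c a_pos by auto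
next
  case (Some z)
  then have eq: "v * (z + 1) = c * (z - 1)" using assms Phi_Some by blast
  have "(z - 1) * (c - v) = c * (z - 1) - v * (z + 1) + 2 * v" by (simp add: algebra_simps)
  then have e: "(z - 1) * (c - v) = 2 * v" using eq by simp
  have "cmod (c - v) \<ge> a - cmod v" using norm_triangle_ineq2[of c v] cmod_c by simp
  then have cv: "cmod (c - v) \<ge> a/2" using assms by simp
  have "cmod (z-1) * cmod (c-v) = 2 * cmod v" using e by (metis norm_mult norm_numeral norm_mult)
  then have "cmod (z-1) * (a/2) \<le> 2 * cmod v" using cv by (metis mult_left_mono norm_ge_zero order_trans)
  then have "cmod (z-1) \<le> 4 * cmod v / a" using a_pos by (simp add: field_simps)
  then have "2 * cmod (z - 1) \<le> 8/a * cmod v" by simp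
  then show ?thesis using chordal_le[of z 1] Some by simp
qed

lemma outside_close:
  assumes "Phi w = Some v" "cmod v \<ge> 2*a"
  shows "chordal w (Some (-1)) \<le> 8 / cmod v"
proof (cases w)
  case None
  then show ?thesis using assms Phi_None_val cmod_c a_pos by auto
next
  case (Some z)
  then have eq: "v * (z + 1) = c * (z - 1)" using assms Phi_Some by blast
  have "(z + 1) * (v - c) = v * (z + 1) - c * (z - 1) - 2 * c" by (simp add: algebra_simps)
  then have e: "(z + 1) * (v - c) = - 2 * c" using eq by simp
  have vpos: "cmod v > 0" by (rule order_less_le_trans[OF _ assms(2)]) (simp add: a_pos)
  have "cmod (v - c) \<ge> cmod v - a" using norm_triangle_ineq2[of v c] cmod_c by simp
  then have cv: "cmod (v - c) \<ge> cmod v / 2" using assms by simp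
  have "cmod (z+1) * cmod (v-c) = 2 * a" using e cmod_c by (metis norm_mult norm_minus_cancel norm_numeral mult_minus_left)
  then have "cmod (z+1) * (cmod v / 2) \<le> 2 * a" using cv by (metis mult_left_mono norm_ge_zero order_trans)
  then have "cmod (z+1) \<le> 4 * a / cmod v" using vpos by (simp add: field_simps)
  also have "\<dots> \<le> 4 / cmod v" using a_le1 vpos by (simp add: divide_right_mono)
  finally have "2 * cmod (z + 1) \<le> 8 / cmod v" by simp
  then show ?thesis using chordal_le[of z "-1"] Some by simp
qed

lemma far_from_1:
  assumes "Phi w = None \<or> (\<exists>v. Phi w = Some v \<and> cmod v \<ge> 1/2)"
  shows "chordal w (Some 1) \<ge> 1/3"
proof -
  have "sqrt 2 < sqrt ((3/2)^2)" by (rule real_sqrt_less_mono) (simp add: power2_eq_square)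
  then have s2: "sqrt 2 < 3/2" by simp
  have s2': "sqrt 2 > 0" by simp
  show ?thesis
  proof (cases "Phi w = None")
    case True
    then have "w = Some (-1)" using Phi_None_iff by blast
    then show ?thesis by (simp add: chordal_def)
  next
    case False
    then obtain v where v: "Phi w = Some v" "cmod v \<ge> 1/2" using assms by auto
    show ?thesis
    proof (cases w)
      case None
      then have "chordal w (Some 1) = 2 / sqrt 2" by (simp add: chordal_def)
      moreover have "sqrt 2 \<le> 2" using s2 by simp
      then have "1 \<le> 2 / sqrt 2" using s2' by (simp add: le_divide_eq)
      ultimately show ?thesis by simp
    next
      case (Some z)
      then have eq: "v * (z + 1) = c * (z - 1)" using v Phi_Some by blast
      then have "cmod v * cmod (z+1) = a * cmod (z-1)" using cmod_c by (metis norm_mult)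
      have "cmod (z+1) / 2 = (1/2) * cmod (z+1)" by simp
      also have "\<dots> \<le> cmod v * cmod (z+1)" using v(2) by (intro mult_right_mono) auto
      also have "\<dots> = a * cmod (z-1)" by fact
      also have "\<dots> \<le> 1 * cmod (z-1)" using a_le1 by (intro mult_right_mono) auto
      finally have "cmod (z+1) / 2 \<le> cmod (z-1)" by simp
      moreover have "2 \<le> cmod (z+1) + cmod (z-1)"
        using norm_triangle_ineq4[of "z+1" "z-1"] by simp
      ultimately have d: "2 \<le> 3 * cmod (z-1)" by simp
      define S where "S = sqrt (1 + (cmod z)^2)"
      have "S \<le> sqrt ((1 + cmod z)^2)" unfolding S_def
        by (intro real_sqrt_le_mono) (simp add: power2_eq_square algebra_simps)
      also have "\<dots> = 1 + cmod z" by simp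
      also have "\<dots> \<le> 2 + cmod (z-1)" using norm_triangle_ineq2[of z 1] by simp
      also have "\<dots> \<le> 4 * cmod (z-1)" using d by simp
      finally have S4: "S \<le> 4 * cmod (z-1)" .
      have Spos: "S > 0" unfolding S_def by (simp add: add_pos_nonneg)
      have ch: "chordal w (Some 1) = 2 * cmod (z-1) / (S * sqrt 2)"
        using Some unfolding chordal_def S_def by simp
      have "S * sqrt 2 \<le> (4 * cmod (z-1)) * (3/2)"
        using S4 s2 Spos s2' by (intro mult_mono) auto
      then have "S * sqrt 2 \<le> 3 * (2 * cmod (z-1))" by simp
      then show ?thesis unfolding ch using Spos s2' by (simp add: field_simps)
    qed
  qed
qed

lemma unif_inside:
  assumes q: "0 \<le> q" "q < 1" and e: "\<epsilon> > 0"
  shows "\<exists>N. \<forall>k\<ge>N. \<forall>y u. Phi y = Some u \<longrightarrow> cmod u \<le> q \<longrightarrow> chordal ((T^^k) y) (Some 1) < \<epsilon>"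
proof -
  have "min (a/2) (\<epsilon>*a/8) > 0" using a_pos e by simp
  then obtain N where N: "q^N < min (a/2) (\<epsilon>*a/8)" using real_arch_pow_inv q by blast
  have "chordal ((T^^k) y) (Some 1) < \<epsilon>" if k: "k \<ge> N" and y: "Phi y = Some u" "cmod u \<le> q" for k y u
  proof -
    have P: "Phi ((T^^k) y) = Some (u^(2^k))" using y Phi_iter by simp
    have "cmod (u^(2^k)) = (cmod u)^(2^k)" by (simp add: norm_power)
    also have "\<dots> \<le> q^(2^k)" using y by (simp add: power_mono)
    also have "\<dots> \<le> q^k" using q by (intro power_decreasing) (auto simp: less_imp_le)
    also have "\<dots> \<le> q^N" using q k by (intro power_decreasing) auto
    finally have b: "cmod (u^(2^k)) \<le> q^N" .
    then have "cmod (u^(2^k)) \<le> a/2" using N by simp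
    then have "chordal ((T^^k) y) (Some 1) \<le> 8/a * cmod (u^(2^k))" using inside_close P by blast
    also have "\<dots> < 8/a * (\<epsilon>*a/8)" using b N a_pos by (intro mult_strict_left_mono) auto
    also have "\<dots> = \<epsilon>" using a_pos by simp
    finally show ?thesis .
  qed
  then show ?thesis by blast
qed

lemma unif_outside:
  assumes Q: "1 < Q" and e: "\<epsilon> > 0"
  shows "\<exists>N. \<forall>k\<ge>N. \<forall>y. (Phi y = None \<or> (\<exists>u. Phi y = Some u \<and> cmod u \<ge> Q)) \<longrightarrow> chordal ((T^^k) y) (Some (-1)) < \<epsilon>"
proof -
  obtain N where N: "max (2*a) (8/\<epsilon>) < Q^N" using real_arch_pow Q by blast
  have "chordal ((T^^k) y) (Some (-1)) < \<epsilon>" if k: "k \<ge> N" and y: "Phi y = None \<or> (\<exists>u. Phi y = Some u \<and> cmod u \<ge> Q)" for k y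
  proof (cases "Phi y = None")
    case True
    then have "Phi ((T^^k) y) = None" using Phi_iter by simp
    then have "(T^^k) y = Some (-1)" using Phi_None_iff by blast
    then show ?thesis using e by simp
  next
    case False
    then obtain u where u: "Phi y = Some u" "cmod u \<ge> Q" using y by auto
    have P: "Phi ((T^^k) y) = Some (u^(2^k))" using u Phi_iter by simp
    have "Q^N \<le> Q^k" using Q k by (intro power_increasing) auto
    also have "\<dots> \<le> Q^(2^k)" using Q by (intro power_increasing) (auto simp: less_imp_le)
    also have "\<dots> \<le> (cmod u)^(2^k)" using u Q by (intro power_mono) auto
    also have "\<dots> = cmod (u^(2^k))" by (simp add: norm_power)
    finally have b: "Q^N \<le> cmod (u^(2^k))" .
    then have b1: "cmod (u^(2^k)) \<ge> 2*a" "cmod (u^(2^k)) > 8/\<epsilon>" using N by auto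
    then have "chordal ((T^^k) y) (Some (-1)) \<le> 8 / cmod (u^(2^k))" using outside_close P by blast
    also have "\<dots> < \<epsilon>"
    proof -
      have xpos: "cmod (u^(2^k)) > 0" by (rule order_less_le_trans[OF _ b1(1)]) (simp add: a_pos)
      show ?thesis using b1(2) e xpos by (simp add: pos_divide_less_eq mult.commute pos_less_divide_eq)
    qed
    finally show ?thesis .
  qed
  then show ?thesis by blast
qed

end

context mn begin

lemma Phi_inv:
  assumes "c \<noteq> w"
  shows "Phi (Some ((c + w) / (c - w))) = Some w"
proof -
  define z where "z = (c + w) / (c - w)"
  have cw: "c - w \<noteq> 0" using assms by simp
  have z1: "z + 1 = 2 * c / (c - w)" unfolding z_def using cw by (simp add: field_simps)
  have z2: "z - 1 = 2 * w / (c - w)" unfolding z_def using cw by (simp add: field_simps)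
  have "z + 1 \<noteq> 0" unfolding z1 using cw c_nz by simp
  then have zn: "z \<noteq> -1" by (metis add.commute add_eq_0_iff2)
  have "c * (z - 1) / (z + 1) = c * (2 * w / (c - w)) / (2 * c / (c - w))" unfolding z1 z2 ..
  also have "\<dots> = w" using cw c_nz by (simp add: field_simps)
  finally show ?thesis using zn unfolding z_def[symmetric] by (simp add: Phi_def)
qed

lemma Phi_Some_mod:
  assumes "z \<noteq> -1"
  shows "Phi (Some z) = Some (c * (z - 1) / (z + 1))" and "cmod (c * (z - 1) / (z + 1)) = a * cmod (z - 1) / cmod (z + 1)"
  using assms by (auto simp: Phi_def norm_mult norm_divide cmod_c)

lemma gpos_inside:
  assumes "q * cmod (z + 1) - a * cmod (z - 1) > 0"
  shows "\<exists>u. Phi (Some z) = Some u \<and> cmod u < q"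
proof -
  have zn: "z \<noteq> -1" using assms a_pos by auto
  then have "cmod (z + 1) > 0" by (metis add.commute add_eq_0_iff2 zero_less_norm_iff)
  then have "a * cmod (z - 1) / cmod (z + 1) < q" using assms by (simp add: field_simps)
  then show ?thesis using Phi_Some_mod[OF zn] by auto
qed

lemma gpos_outside:
  assumes "a * cmod (z - 1) - Q * cmod (z + 1) > 0"
  shows "Phi (Some z) = None \<or> (\<exists>u. Phi (Some z) = Some u \<and> cmod u \<ge> Q)"
proof (cases "z = -1")
  case True then show ?thesis by (simp add: Phi_def)
next
  case False
  then have "cmod (z + 1) > 0" by (metis add.commute add_eq_0_iff2 zero_less_norm_iff)
  then have "a * cmod (z - 1) / cmod (z + 1) > Q" using assms by (simp add: field_simps)
  then show ?thesis using Phi_Some_mod[OF False] by auto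
qed

lemma fatou_inside:
  assumes x0: "Phi x0 = Some u0" and u0: "cmod u0 < 1"
  shows "x0 \<in> fatou_set T"
proof -
  define q where "q = (cmod u0 + 1) / 2"
  have q: "cmod u0 < q" "q < 1" "0 \<le> q" using u0 unfolding q_def by auto
  have "\<exists>\<rho>>0. \<forall>y. chordal x0 y < \<rho> \<longrightarrow> (\<exists>u. Phi y = Some u \<and> cmod u < q)"
  proof (cases x0)
    case (Some z0)
    then have e: "z0 \<noteq> -1" "u0 * (z0 + 1) = c * (z0 - 1)" using x0 Phi_Some by auto
    then have "cmod (z0 + 1) > 0" by (metis add.commute add_eq_0_iff2 zero_less_norm_iff)
    have "cmod u0 * cmod (z0 + 1) = a * cmod (z0 - 1)" using e(2) cmod_c by (metis norm_mult)
    moreover have "cmod u0 * cmod (z0 + 1) < q * cmod (z0 + 1)"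
      using q \<open>cmod (z0 + 1) > 0\<close> by (intro mult_strict_right_mono) auto
    ultimately have g0: "q * cmod (z0 + 1) - a * cmod (z0 - 1) > 0" by simp
    have "isCont (\<lambda>z. q * cmod (z + 1) - a * cmod (z - 1)) z0" by (intro continuous_intros)
    from chordal_open[OF this g0] obtain \<rho> where \<rho>: "\<rho> > 0"
      "\<forall>y. chordal (Some z0) y < \<rho> \<longrightarrow> (\<exists>z. y = Some z \<and> q * cmod (z + 1) - a * cmod (z - 1) > 0)"
      by blast
    show ?thesis using \<rho> gpos_inside Some by metis
  next
    case None
    then have u0c: "u0 = c" using x0 Phi_None_val by simp
    then have aq: "a < q" using q cmod_c by simp
    define R0 where "R0 = (q + a) / (q - a)"
    have R0: "R0 > 0" unfolding R0_def using aq a_pos by simp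
    define \<rho> where "\<rho> = 2 / (1 + R0)"
    have "\<rho> > 0" unfolding \<rho>_def using R0 by simp
    moreover have "\<exists>u. Phi y = Some u \<and> cmod u < q" if y: "chordal x0 y < \<rho>" for y
    proof (cases y)
      case None then show ?thesis using aq cmod_c by (simp add: Phi_def)
    next
      case (Some z)
      have big: "cmod z > R0"
      proof (rule ccontr)
        assume "\<not> cmod z > R0"
        then have zr: "cmod z \<le> R0" by simp
        have "sqrt (1 + (cmod z)^2) \<le> sqrt ((1 + cmod z)^2)"
          by (intro real_sqrt_le_mono) (simp add: power2_eq_square algebra_simps)
        also have "\<dots> = 1 + cmod z" by simp
        also have "\<dots> \<le> 1 + R0" using zr by simp
        finally have "sqrt (1 + (cmod z)^2) \<le> 1 + R0" .
        moreover have "sqrt (1 + (cmod z)^2) > 0" by (simp add: add_pos_nonneg)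
        ultimately have "2 / sqrt (1 + (cmod z)^2) \<ge> \<rho>" unfolding \<rho>_def
          using R0 by (intro divide_left_mono) (auto simp: mult_pos_pos)
        then show False using y None Some by (simp add: chordal_def)
      qed
      have "q * cmod (z + 1) - a * cmod (z - 1) \<ge> q * (cmod z - 1) - a * (cmod z + 1)"
      proof -
        have "q * (cmod z - 1) \<le> q * cmod (z + 1)"
          using norm_triangle_ineq2[of z "-1"] q by (intro mult_left_mono) auto
        moreover have "a * cmod (z - 1) \<le> a * (cmod z + 1)"
          using norm_triangle_ineq4[of z 1] a_pos by (intro mult_left_mono) auto
        ultimately show ?thesis by simp
      qed
      moreover have "q * (cmod z - 1) - a * (cmod z + 1) > 0"
      proof -
        have "(q - a) * cmod z > (q - a) * R0" using big aq by simp
        also have "(q - a) * R0 = q + a" unfolding R0_def using aq by simp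
        finally show ?thesis by (simp add: algebra_simps)
      qed
      ultimately show ?thesis using gpos_inside Some by (metis less_le_trans)
    qed
    ultimately show ?thesis by blast
  qed
  then obtain \<rho> where \<rho>: "\<rho> > 0" "\<forall>y. chordal x0 y < \<rho> \<longrightarrow> (\<exists>u. Phi y = Some u \<and> cmod u < q)"
    by blast
  have "normal_family_on (range (\<lambda>k. T^^k)) (chball x0 \<rho>)"
  proof (rule normal_from_unif[where A = "Some 1"])
    show "\<forall>\<epsilon>>0. \<exists>N. \<forall>k\<ge>N. \<forall>y\<in>chball x0 \<rho>. chordal ((T^^k) y) (Some 1) < \<epsilon>"
    proof (intro allI impI)
      fix \<epsilon> :: real assume "\<epsilon> > 0"
      from unif_inside[OF q(3) q(2) this] obtain N where
        N: "\<forall>k\<ge>N. \<forall>y u. Phi y = Some u \<longrightarrow> cmod u \<le> q \<longrightarrow> chordal ((T^^k) y) (Some 1) < \<epsilon>" by blast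
      show "\<exists>N. \<forall>k\<ge>N. \<forall>y\<in>chball x0 \<rho>. chordal ((T^^k) y) (Some 1) < \<epsilon>"
      proof (rule exI[of _ N], intro allI impI ballI)
        fix k y assume "N \<le> k" "y \<in> chball x0 \<rho>"
        then obtain u where "Phi y = Some u" "cmod u < q" using \<rho> unfolding chball_def by blast
        then show "chordal ((T^^k) y) (Some 1) < \<epsilon>" using N \<open>N \<le> k\<close> by auto
      qed
    qed
    show "\<forall>x\<in>chball x0 \<rho>. \<exists>\<delta>>0. chball x \<delta> \<subseteq> chball x0 \<rho>" using chball_open by blast
  qed
  then show ?thesis unfolding fatou_set_def using \<rho>(1) by blast
qed

lemma fatou_outside:
  assumes x0: "Phi x0 = None \<or> (\<exists>u0. Phi x0 = Some u0 \<and> cmod u0 > 1)"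
  shows "x0 \<in> fatou_set T"
proof -
  obtain z0 where z0: "x0 = Some z0"
    using x0 cmod_c a_le1 by (cases x0) (auto simp: Phi_def)
  obtain Q where Q: "Q > 1" "a * cmod (z0 - 1) - Q * cmod (z0 + 1) > 0"
  proof (cases "z0 = -1")
    case True
    then show ?thesis using that[of 2] a_pos by simp
  next
    case False
    then have "Phi x0 \<noteq> None" using z0 Phi_None_iff by simp
    then obtain u0 where u0: "Phi x0 = Some u0" "cmod u0 > 1" using x0 by auto
    then have e: "u0 * (z0 + 1) = c * (z0 - 1)" using z0 Phi_Some by auto
    have pos: "cmod (z0 + 1) > 0" using False by (metis add.commute add_eq_0_iff2 zero_less_norm_iff)
    have "cmod u0 * cmod (z0 + 1) = a * cmod (z0 - 1)" using e cmod_c by (metis norm_mult)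
    moreover have "(cmod u0 + 1) / 2 * cmod (z0 + 1) < cmod u0 * cmod (z0 + 1)"
      using u0 pos by (intro mult_strict_right_mono) auto
    ultimately show ?thesis using that[of "(cmod u0 + 1) / 2"] u0 by simp
  qed
  have "isCont (\<lambda>z. a * cmod (z - 1) - Q * cmod (z + 1)) z0" by (intro continuous_intros)
  from chordal_open[OF this Q(2)] obtain \<rho> where \<rho>: "\<rho> > 0"
    "\<forall>y. chordal (Some z0) y < \<rho> \<longrightarrow> (\<exists>z. y = Some z \<and> a * cmod (z - 1) - Q * cmod (z + 1) > 0)"
    by blast
  have normal: "normal_family_on (range (\<lambda>k. T^^k)) (chball x0 \<rho>)"
  proof (rule normal_from_unif[where A = "Some (-1)"])
    show "\<forall>\<epsilon>>0. \<exists>N. \<forall>k\<ge>N. \<forall>y\<in>chball x0 \<rho>. chordal ((T^^k) y) (Some (-1)) < \<epsilon>"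
    proof (intro allI impI)
      fix \<epsilon> :: real assume "\<epsilon> > 0"
      from unif_outside[OF Q(1) this] obtain N where
        N: "\<forall>k\<ge>N. \<forall>y. (Phi y = None \<or> (\<exists>u. Phi y = Some u \<and> cmod u \<ge> Q)) \<longrightarrow> chordal ((T^^k) y) (Some (-1)) < \<epsilon>" by blast
      show "\<exists>N. \<forall>k\<ge>N. \<forall>y\<in>chball x0 \<rho>. chordal ((T^^k) y) (Some (-1)) < \<epsilon>"
      proof (rule exI[of _ N], intro allI impI ballI)
        fix k y assume "N \<le> k" "y \<in> chball x0 \<rho>"
        then obtain z where "y = Some z" "a * cmod (z - 1) - Q * cmod (z + 1) > 0"
          using \<rho> z0 unfolding chball_def by blast
        then have h: "Phi y = None \<or> (\<exists>u. Phi y = Some u \<and> cmod u \<ge> Q)"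
          using gpos_outside[where Q=Q and z=z] by simp
        show "chordal ((T^^k) y) (Some (-1)) < \<epsilon>" using N[rule_format, OF \<open>N \<le> k\<close> h] .
      qed

    qed
    show "\<forall>x\<in>chball x0 \<rho>. \<exists>\<delta>>0. chball x \<delta> \<subseteq> chball x0 \<rho>" using chball_open by blast
  qed
  then show ?thesis unfolding fatou_set_def using \<rho>(1) by blast
qed

end

context mn begin

lemma approx_J:
  assumes x0: "Phi x0 = Some u0" "cmod u0 = 1" and d: "\<delta> > 0"
  shows "\<exists>y u. chordal x0 y < \<delta> \<and> Phi y = Some u \<and> cmod u < 1 \<and> (cmod u)^(2^K) \<ge> 1/2"
proof -
  define b0 where "b0 = (if a < 1 then max (1/2) a else 1/2)"
  have b0: "b0 < 1" using a_le1 by (auto simp: b0_def)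
  define F where "F = at_left (1::real)"
  have Fnb: "F \<noteq> bot" unfolding F_def using trivial_limit_at_left_real by blast
  define zs where "zs = (\<lambda>s::real. (c + of_real s * u0) / (c - of_real s * u0))"
  have E1: "eventually (\<lambda>s. s \<in> {b0<..<1}) F" using eventually_at_left_real[OF b0] F_def by simp
  have "((\<lambda>s::real. s^(2^K)) \<longlongrightarrow> 1^(2^K)) F" unfolding F_def by (intro tendsto_intros)
  then have E2: "eventually (\<lambda>s. s^(2^K) > 1/2) F" by (rule order_tendstoD) simp
  have key: "c \<noteq> of_real s * u0 \<and> Phi (Some (zs s)) = Some (of_real s * u0) \<and> cmod (of_real s * u0) = s"
    if s: "s \<in> {b0<..<1}" for s
  proof -
    have s0: "s > 0" using s unfolding b0_def by (auto split: if_splits)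
    have m: "cmod (of_real s * u0) = s" using s0 x0(2) by (simp add: norm_mult)
    have "s \<noteq> a" using s a_le1 unfolding b0_def by (auto split: if_splits)
    then have ne: "c \<noteq> of_real s * u0" using m cmod_c by auto
    show ?thesis using ne m Phi_inv[OF ne] unfolding zs_def by simp
  qed
  have E3: "eventually (\<lambda>s. chordal x0 (Some (zs s)) < \<delta>) F"
  proof (cases x0)
    case None
    then have u0c: "u0 = c" using x0 Phi_None_val by simp
    have b1: "max b0 (1 - \<delta>/2) < 1" using b0 d by simp
    have "chordal x0 (Some (zs s)) < \<delta>" if s: "s \<in> {max b0 (1 - \<delta>/2)<..<1}" for s
    proof -
      have s0: "s > 0" "s < 1" "1 - s < \<delta>/2" using s unfolding b0_def by (auto split: if_splits)
      define r where "r = (1 + s) / (1 - s)"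
      have "c + of_real s * c = c * of_real (1 + s)" "c - of_real s * c = c * of_real (1 - s)"
        by (simp_all add: algebra_simps)
      then have zr: "zs s = of_real r" unfolding zs_def u0c r_def using c_nz by simp
      have "r > 0" unfolding r_def using s0 by simp
      then have cm: "cmod (zs s) = r" unfolding zr using norm_of_real[of r] by simp
      have "r \<ge> 1 / (1 - s)" unfolding r_def using s0 by (intro divide_right_mono) auto
      moreover have "1 / (1 - s) > 2 / \<delta>" using s0 d by (simp add: field_simps)
      ultimately have r2: "r > 2 / \<delta>" by simp
      then have rpos: "r > 0" using d by (smt (verit) divide_pos_pos)
      have "sqrt (1 + r^2) \<ge> sqrt (r^2)" by (intro real_sqrt_le_mono) simp
      then have sr: "sqrt (1 + r^2) \<ge> r" using rpos by simp
      have "2 / sqrt (1 + r^2) \<le> 2 / r" using sr rpos by (intro divide_left_mono) (auto intro: mult_pos_pos order_less_le_trans)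
      also have "2 / r < \<delta>" using r2 rpos d by (simp add: field_simps)
      finally show ?thesis using None cm by (simp add: chordal_def)
    qed
    then show ?thesis using eventually_at_left_real[OF b1] unfolding F_def
      by (auto elim: eventually_mono)
  next
    case (Some z0)
    then have e: "z0 \<noteq> -1" "u0 * (z0 + 1) = c * (z0 - 1)" using x0 Phi_Some by auto
    have cu: "c - u0 \<noteq> 0"
    proof
      assume "c - u0 = 0"
      then have "c * (z0 + 1) = c * (z0 - 1)" using e by simp
      then show False using c_nz by simp
    qed
    have "z0 * (c - u0) = c + u0" using e(2) by (simp add: algebra_simps)
    then have z0: "z0 = (c + u0) / (c - u0)" using cu by (simp add: field_simps)
    have "(zs \<longlongrightarrow> (c + of_real 1 * u0) / (c - of_real 1 * u0)) F"
      unfolding zs_def F_def using cu by (intro tendsto_intros) auto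
    then have "(zs \<longlongrightarrow> z0) F" using z0 by simp
    then have ev: "eventually (\<lambda>s. dist (zs s) z0 < \<delta>/2) F" using d by (intro tendstoD) auto
    show ?thesis
    proof (rule eventually_mono[OF ev])
      fix s assume "dist (zs s) z0 < \<delta>/2"
      then have "2 * cmod (z0 - zs s) < \<delta>" by (simp add: dist_norm norm_minus_commute)
      then show "chordal x0 (Some (zs s)) < \<delta>" using chordal_le[of z0 "zs s"] Some by simp
    qed
  qed
  have "eventually (\<lambda>s. s \<in> {b0<..<1} \<and> s^(2^K) > 1/2 \<and> chordal x0 (Some (zs s)) < \<delta>) F"
    using E1 E2 E3 by (intro eventually_conj)
  then obtain s where s: "s \<in> {b0<..<1}" "s^(2^K) > 1/2" "chordal x0 (Some (zs s)) < \<delta>"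
    using eventually_happens'[OF Fnb] by blast
  show ?thesis
    apply (rule exI[of _ "Some (zs s)"], rule exI[of _ "of_real s * u0"])
    using key[OF s(1)] s by auto
qed

lemma julia_part:
  assumes x0: "Phi x0 = Some u0" "cmod u0 = 1"
  shows "x0 \<notin> fatou_set T"
proof
  assume "x0 \<in> fatou_set T"
  then obtain \<rho> where \<rho>: "\<rho> > 0" "normal_family_on (range (\<lambda>k. T^^k)) (chball x0 \<rho>)"
    unfolding fatou_set_def by blast
  from \<rho>(2)[unfolded normal_family_on_def, rule_format, of "\<lambda>k. T^^k"]
  obtain r g where r: "strict_mono (r::nat\<Rightarrow>nat)" and
    conv: "\<forall>x\<in>chball x0 \<rho>. \<exists>\<delta>>0. chball x \<delta> \<subseteq> chball x0 \<rho> \<and>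
      (\<forall>\<epsilon>>0. \<exists>N. \<forall>j\<ge>N. \<forall>y\<in>chball x \<delta>. chordal ((T^^(r j)) y) (g y) < \<epsilon>)"
    by auto
  have "x0 \<in> chball x0 \<rho>" using \<rho> by (simp add: chball_def)
  then obtain \<delta> where \<delta>: "\<delta> > 0"
    and U: "\<forall>\<epsilon>>0. \<exists>N. \<forall>j\<ge>N. \<forall>y\<in>chball x0 \<delta>. chordal ((T^^(r j)) y) (g y) < \<epsilon>"
    using conv by blast
  obtain N where N: "\<forall>j\<ge>N. \<forall>y\<in>chball x0 \<delta>. chordal ((T^^(r j)) y) (g y) < 1/12"
    using U[rule_format, of "1/12"] by auto
  obtain y u where y: "chordal x0 y < \<delta>" "Phi y = Some u" "cmod u < 1" "(cmod u)^(2^(r N)) \<ge> 1/2"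
    using approx_J[OF x0 \<delta>, of "r N"] by blast
  have "Phi ((T^^(r N)) y) = Some (u^(2^(r N)))" using y Phi_iter by simp
  moreover have "cmod (u^(2^(r N))) \<ge> 1/2" using y by (simp add: norm_power)
  ultimately have far: "chordal ((T^^(r N)) y) (Some 1) \<ge> 1/3" using far_from_1 by blast
  obtain N' where N': "\<forall>k\<ge>N'. \<forall>y' u'. Phi y' = Some u' \<longrightarrow> cmod u' \<le> cmod u \<longrightarrow> chordal ((T^^k) y') (Some 1) < 1/12"
    using unif_inside[of "cmod u" "1/12"] y by auto
  define j where "j = max N N'"
  have "r j \<ge> N'" using seq_suble[OF r, of j] unfolding j_def by simp
  then have c1: "chordal ((T^^(r j)) y) (Some 1) < 1/12" using N' y by blast
  have yin: "y \<in> chball x0 \<delta>" using y by (simp add: chball_def)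
  have c2: "chordal ((T^^(r j)) y) (g y) < 1/12" using N yin unfolding j_def by auto
  have c3: "chordal ((T^^(r N)) y) (g y) < 1/12" using N yin by auto
  have "chordal ((T^^(r N)) y) (Some 1) \<le> chordal ((T^^(r N)) y) (g y) + chordal (g y) (Some 1)"
    by (rule chordal_tri)
  also have "chordal (g y) (Some 1) \<le> chordal (g y) ((T^^(r j)) y) + chordal ((T^^(r j)) y) (Some 1)"
    by (rule chordal_tri)
  finally have "chordal ((T^^(r N)) y) (Some 1) < 1/3"
    using c1 c2 c3 chordal_sym[of "g y" "(T^^(r j)) y"] by simp
  then show False using far by simp
qed

lemma julia_eq: "julia_set T = {x. \<exists>u. Phi x = Some u \<and> cmod u = 1}"
proof (rule set_eqI)
  fix x
  show "x \<in> julia_set T \<longleftrightarrow> x \<in> {x. \<exists>u. Phi x = Some u \<and> cmod u = 1}"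
  proof
    assume "x \<in> julia_set T"
    then have nf: "x \<notin> fatou_set T" unfolding julia_set_def by simp
    show "x \<in> {x. \<exists>u. Phi x = Some u \<and> cmod u = 1}"
    proof (cases "Phi x")
      case None
      then show ?thesis using fatou_outside nf by blast
    next
      case (Some u)
      have "\<not> cmod u < 1" using fatou_inside[OF Some] nf by blast
      moreover have "\<not> cmod u > 1" using fatou_outside[of x] Some nf by blast
      ultimately show ?thesis using Some by simp
    qed
  next
    assume "x \<in> {x. \<exists>u. Phi x = Some u \<and> cmod u = 1}"
    then show "x \<in> julia_set T" using julia_part unfolding julia_set_def by blast
  qed
qed

end

lemma circ_id:
  fixes M N x y :: real
  assumes D: "M^2 - N^2 \<noteq> 0"
  shows "(x + (M^2 + N^2)/(M^2 - N^2))^2 + y^2 - (2*M*N/(M^2 - N^2))^2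
       = (M^2*((x+1)^2+y^2) - N^2*((x-1)^2+y^2)) / (M^2 - N^2)"
proof -
  define D where "D = M^2 - N^2"
  have D0: "D \<noteq> 0" using D unfolding D_def .
  have "(x + (M^2 + N^2)/D)^2 + y^2 - (2*M*N/D)^2 = ((x*D + (M^2 + N^2))^2 + y^2*D^2 - (2*M*N)^2) / D^2"
    using D0 by (simp add: field_simps power2_eq_square)
  also have "(x*D + (M^2 + N^2))^2 + y^2*D^2 - (2*M*N)^2 = D * (M^2*((x+1)^2+y^2) - N^2*((x-1)^2+y^2))"
    unfolding D_def by algebra
  also have "D * (M^2*((x+1)^2+y^2) - N^2*((x-1)^2+y^2)) / D^2 = (M^2*((x+1)^2+y^2) - N^2*((x-1)^2+y^2)) / D"
    using D0 by (simp add: power2_eq_square)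
  finally show ?thesis unfolding D_def .
qed

lemma cmod_sq_minus1: "(cmod (z - 1))^2 = (Re z - 1)^2 + (Im z)^2"
  by (simp add: cmod_power2)
lemma cmod_sq_plus1: "(cmod (z + 1))^2 = (Re z + 1)^2 + (Im z)^2"
  by (simp add: cmod_power2)

context mn begin

lemma Jmem_Some: "(\<exists>u. Phi (Some z) = Some u \<and> cmod u = 1) \<longleftrightarrow> real n * cmod (z - 1) = real m * cmod (z + 1)"
proof (cases "z = -1")
  case True
  then show ?thesis using n1 by (simp add: Phi_def)
next
  case False
  then have pos: "cmod (z + 1) > 0" by (metis add.commute add_eq_0_iff2 zero_less_norm_iff)
  have m0: "real m > 0" using n1 nm by simp
  have "(\<exists>u. Phi (Some z) = Some u \<and> cmod u = 1) \<longleftrightarrow> a * cmod (z - 1) / cmod (z + 1) = 1"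
    using Phi_Some_mod[OF False] by auto
  also have "\<dots> \<longleftrightarrow> a * cmod (z - 1) = cmod (z + 1)" using pos by (simp add: divide_eq_eq)
  also have "\<dots> \<longleftrightarrow> real n * cmod (z - 1) = real m * cmod (z + 1)"
    unfolding a_def using m0 by (auto simp: field_simps)
  finally show ?thesis .
qed

lemma Jset_eq:
  assumes "m = n"
  shows "{x. \<exists>u. Phi x = Some u \<and> cmod u = 1} = insert None (Some ` {z. Re z = 0})"
proof (rule set_eqI)
  fix x show "x \<in> {x. \<exists>u. Phi x = Some u \<and> cmod u = 1} \<longleftrightarrow> x \<in> insert None (Some ` {z. Re z = 0})"
  proof (cases x)
    case None
    have "cmod c = 1" using cmod_c assms n1 unfolding a_def by simp
    then show ?thesis using None by (simp add: Phi_def)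
  next
    case (Some z)
    have n0: "real n > 0" using n1 by simp
    have "real n * cmod (z - 1) = real m * cmod (z + 1) \<longleftrightarrow> cmod (z - 1) = cmod (z + 1)"
      using assms n0 by simp
    also have "\<dots> \<longleftrightarrow> (cmod (z - 1))^2 = (cmod (z + 1))^2"
      by (metis norm_ge_zero power2_eq_iff_nonneg)
    also have "\<dots> \<longleftrightarrow> Re z = 0" unfolding cmod_sq_minus1 cmod_sq_plus1
      by (simp add: power2_eq_square algebra_simps)
    finally show ?thesis using Some Jmem_Some[of z] by auto
  qed
qed

lemma Jset_lt:
  assumes "n < m"
  shows "{x. \<exists>u. Phi x = Some u \<and> cmod u = 1} =
    Some ` {z. cmod (z + complex_of_real ((real m ^ 2 + real n ^ 2) / (real m ^ 2 - real n ^ 2)))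
                       = 2 * real m * real n / (real m ^ 2 - real n ^ 2)}"
proof (rule set_eqI)
  fix x
  define A where "A = (real m ^ 2 + real n ^ 2) / (real m ^ 2 - real n ^ 2)"
  define R where "R = 2 * real m * real n / (real m ^ 2 - real n ^ 2)"
  have Dp: "real m ^ 2 - real n ^ 2 > 0" using assms
    by (simp add: power_strict_mono)
  have R0: "R \<ge> 0" unfolding R_def by (rule divide_nonneg_pos[OF _ Dp]) simp
  have "x \<in> {x. \<exists>u. Phi x = Some u \<and> cmod u = 1} \<longleftrightarrow>
    x \<in> Some ` {z. cmod (z + complex_of_real A) = R}"
  proof (cases x)
    case None
    have "cmod c \<noteq> 1" using cmod_c assms unfolding a_def by simp
    then show ?thesis using None by (simp add: Phi_def)
  next
    case (Some z)
    have "real n * cmod (z - 1) = real m * cmod (z + 1) \<longleftrightarrow>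
          (real n * cmod (z - 1))^2 = (real m * cmod (z + 1))^2"
      by (metis norm_ge_zero of_nat_0_le_iff mult_nonneg_nonneg power2_eq_iff_nonneg)
    also have "\<dots> \<longleftrightarrow> (real m)^2 * ((Re z + 1)^2 + (Im z)^2) - (real n)^2 * ((Re z - 1)^2 + (Im z)^2) = 0"
      unfolding power_mult_distrib cmod_sq_minus1 cmod_sq_plus1 by auto
    also have "\<dots> \<longleftrightarrow> (Re z + A)^2 + (Im z)^2 - R^2 = 0"
      unfolding A_def R_def circ_id[OF less_imp_neq[OF Dp, symmetric]] using Dp assms by simp
    also have "\<dots> \<longleftrightarrow> (cmod (z + complex_of_real A))^2 = R^2" by (simp add: cmod_power2)
    also have "\<dots> \<longleftrightarrow> cmod (z + complex_of_real A) = R"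
      using R0 by (metis norm_ge_zero power2_eq_iff_nonneg)
    finally show ?thesis using Some Jmem_Some[of z] by auto
  qed
  then show "x \<in> {x. \<exists>u. Phi x = Some u \<and> cmod u = 1} \<longleftrightarrow>
    x \<in> Some ` {z. cmod (z + complex_of_real ((real m ^ 2 + real n ^ 2) / (real m ^ 2 - real n ^ 2)))
                       = 2 * real m * real n / (real m ^ 2 - real n ^ 2)}"
    unfolding A_def R_def .
qed

end

theorem theorem1:
  fixes m n :: nat
  assumes "1 \<le> n" and "n \<le> m"
  shows "(m = n \<longrightarrow> julia_set (T_mn m n) = insert None (Some ` {z. Re z = 0}))
       \<and> (n < m \<longrightarrow> julia_set (T_mn m n) =
            Some ` {z. cmod (z + complex_of_real ((real m ^ 2 + real n ^ 2) / (real m ^ 2 - real n ^ 2)))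
                       = 2 * real m * real n / (real m ^ 2 - real n ^ 2)})"
proof -
  interpret mn m n using assms by unfold_locales
  show ?thesis
  proof (intro conjI impI)
    assume h: "m = n"
    show "julia_set (T_mn m n) = insert None (Some ` {z. Re z = 0})"
      by (rule trans[OF julia_eq Jset_eq[OF h]])
  next
    assume h: "n < m"
    show "julia_set (T_mn m n) =
            Some ` {z. cmod (z + complex_of_real ((real m ^ 2 + real n ^ 2) / (real m ^ 2 - real n ^ 2)))
                       = 2 * real m * real n / (real m ^ 2 - real n ^ 2)}"
      by (rule trans[OF julia_eq Jset_lt[OF h]])
  qed
qed

end
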